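(* Let $S$ and $A$ be nonempty Borel spaces and $q(dy|x,a)$ a signed kernel as in the context, and suppose that (b) for each bounded continuous $f$ on $S$, $(x,a)\mapsto\int_S f(y)\tilde q(dy|x,a)/q_x(a)$ is continuous on $S\times A$, and (c) $(x,a)\mapsto q_x(a)$ is continuous on $S\times A$. Then: (a) for each lower semicontinuous function $c:S\times A\to[0,\infty]$, the function $(x,a)\mapsto c(x,a)/q_x(a)$ is lower semicontinuous on $S\times A$; and for each bounded continuous function $f$ on $S$, $(x,a)\mapsto\int_S f(y)q(dy|x,a)$ is continuous on $S\times A$; (b) for each lower semicontinuous function $f:S\to[0,\infty]$, the function $(x,a)\mapsto\int_S f(y)\tilde q(dy|x,a)\in[0,\infty]$ is lower semicontinuous on $S\times A$.
   Context: $S$ and $A$ are nonempty Borel spaces (metrizable), and $q(dy|x,a)$ is a signed kernel on $\mathcal B(S)$ given $(x,a)\in S\times A$ such that $\tilde q(\Gamma|x,a):=q(\Gamma\setminus\{x\}|x,a)\ge0$ for all $\Gamma\in\mathcal B(S)$, $q(S|x,a)=0$, and, with $q_x(a):=-q(\{x\}|x,a)\ge0$, $\sup_{a\in A}q_x(a)<\infty$ for each $x\in S$. Conventions: $0/0:=0$, $0\cdot\infty:=0$, $c/0:=+\infty$ for $c>0$. *)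

theory Defs
  imports "HOL-Analysis.Analysis"
begin

definition lsc_on :: "'a topology \<Rightarrow> ('a \<Rightarrow> ennreal) \<Rightarrow> bool" where
  "lsc_on X f \<longleftrightarrow> (\<forall>t. openin X {z \<in> topspace X. t < f z})"

definition signed_kernel ::
  "'s::topological_space set \<Rightarrow> 'b::topological_space set \<Rightarrow> ('s \<Rightarrow> 'b \<Rightarrow> 's set \<Rightarrow> real) \<Rightarrow> bool" where
  "signed_kernel S A q \<longleftrightarrow>
     (\<forall>x\<in>S. \<forall>a\<in>A. q x a {} = 0 \<and>
        (\<forall>F. range F \<subseteq> sets (restrict_space borel S) \<longrightarrow> disjoint_family F \<longrightarrow>
             (\<lambda>n. q x a (F n)) sums q x a (\<Union>n. F n))) \<and>
     (\<forall>\<Gamma>\<in>sets (restrict_space borel S).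
        (\<lambda>(x, a). q x a \<Gamma>) \<in> borel_measurable (restrict_space borel (S \<times> A)))"

definition qx :: "('s \<Rightarrow> 'b \<Rightarrow> 's set \<Rightarrow> real) \<Rightarrow> 's \<Rightarrow> 'b \<Rightarrow> real" where
  "qx q x a = - q x a {x}"

definition qtilde :: "'s::topological_space set \<Rightarrow> ('s \<Rightarrow> 'b \<Rightarrow> 's set \<Rightarrow> real) \<Rightarrow> 's \<Rightarrow> 'b \<Rightarrow> 's measure" where
  "qtilde S q x a = measure_of S (sets (restrict_space borel S)) (\<lambda>\<Gamma>. ennreal (q x a (\<Gamma> - {x})))"

text \<open>Integral of f with respect to the signed measure q(dy|x,a) = tilde q(dy|x,a) - q_x(a) delta_x(dy)
  (its Jordan decomposition).\<close>
definition q_integral ::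
  "'s::topological_space set \<Rightarrow> ('s \<Rightarrow> 'b \<Rightarrow> 's set \<Rightarrow> real) \<Rightarrow> 's \<Rightarrow> 'b \<Rightarrow> ('s \<Rightarrow> real) \<Rightarrow> real" where
  "q_integral S q x a f = (\<integral>y. f y \<partial>(qtilde S q x a)) - qx q x a * f x"

definition ediv :: "ennreal \<Rightarrow> real \<Rightarrow> ennreal" where
  "ediv c r = (if r = 0 then (if c = 0 then 0 else \<infinity>) else c / ennreal r)"

end

theory Submission
  imports Defs
begin


lemma qt_space_sets:
  fixes S :: "'s::topological_space set"
  shows "space (qtilde S q x a) = S" "sets (qtilde S q x a) = sets (restrict_space borel S)"
proof -
  have "sets (restrict_space borel S) \<subseteq> Pow S"
    using sets.space_closed[of "restrict_space borel S"] by (simp add: space_restrict_space)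
  then show "space (qtilde S q x a) = S" "sets (qtilde S q x a) = sets (restrict_space borel S)"
    unfolding qtilde_def by (simp_all add: space_measure_of_conv sets_measure_of space_restrict_space sets.sigma_sets_eq[of "restrict_space borel S", simplified space_restrict_space, simplified])
qed

lemma singleton_sets:
  fixes S :: "'s::t1_space set"
  assumes "x \<in> S"
  shows "{x} \<in> sets (restrict_space borel S)"
proof -
  have "{x} \<in> sets borel" by simp
  moreover have "{x} = S \<inter> {x}" using assms by auto
  ultimately show ?thesis unfolding sets_restrict_space by blast
qed

lemma qt_emeasure:
  fixes S :: "'s::t1_space set"
  assumes kernel: "signed_kernel S A q" and x: "x \<in> S" and a: "a \<in> A"
    and nn: "\<And>\<Gamma>. \<Gamma> \<in> sets (restrict_space borel S) \<Longrightarrow> q x a (\<Gamma> - {x}) \<ge> 0"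
    and G: "\<Gamma> \<in> sets (restrict_space borel S)"
  shows "emeasure (qtilde S q x a) \<Gamma> = ennreal (q x a (\<Gamma> - {x}))"
  unfolding qtilde_def
proof (rule emeasure_measure_of_sigma)
  show "sigma_algebra S (sets (restrict_space borel S))"
    using sets.sigma_algebra_axioms[of "restrict_space borel S"] by (simp add: space_restrict_space)
  show "positive (sets (restrict_space borel S)) (\<lambda>\<Gamma>. ennreal (q x a (\<Gamma> - {x})))"
    using kernel x a unfolding signed_kernel_def positive_def by auto
  show "countably_additive (sets (restrict_space borel S)) (\<lambda>\<Gamma>. ennreal (q x a (\<Gamma> - {x})))"
    unfolding countably_additive_def
  proof (intro allI impI)
    fix F :: "nat \<Rightarrow> 's set"
    assume F: "range F \<subseteq> sets (restrict_space borel S)" "disjoint_family F"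
    have sx: "{x} \<in> sets (restrict_space borel S)" using x by (rule singleton_sets)
    have F': "range (\<lambda>n. F n - {x}) \<subseteq> sets (restrict_space borel S)" using F sx by auto
    have D: "disjoint_family (\<lambda>n. F n - {x})" using F(2) unfolding disjoint_family_on_def by auto
    have "(\<lambda>n. q x a (F n - {x})) sums q x a (\<Union>n. F n - {x})"
      using kernel x a F' D unfolding signed_kernel_def by blast
    moreover have "(\<Union>n. F n - {x}) = (\<Union>n. F n) - {x}" by auto
    ultimately have "(\<lambda>n. q x a (F n - {x})) sums q x a ((\<Union>n. F n) - {x})" by simp
    moreover have "\<And>n. 0 \<le> q x a (F n - {x})" using F nn by auto
    ultimately show "(\<Sum>n. ennreal (q x a (F n - {x}))) = ennreal (q x a ((\<Union>n. F n) - {x}))"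
      by (rule suminf_ennreal_eq[rotated])
  qed
qed (rule G)

lemma qx_eq:
  fixes S :: "'s::t1_space set"
  assumes kernel: "signed_kernel S A q" and x: "x \<in> S" and a: "a \<in> A"
    and SB: "S \<in> sets borel" and cons: "q x a S = 0"
  shows "qx q x a = q x a (S - {x})"
proof -
  define F where "F n = (if n = 0 then S - {x} else if n = 1 then {x} else {})" for n :: nat
  have sx: "{x} \<in> sets (restrict_space borel S)" using x by (rule singleton_sets)
  have SS: "S \<in> sets (restrict_space borel S)"
    using SB by (simp add: sets_restrict_space_iff)
  have "range F \<subseteq> sets (restrict_space borel S)"
    using sx SS unfolding F_def by auto
  moreover have "disjoint_family F" unfolding disjoint_family_on_def F_def by auto
  ultimately have "(\<lambda>n. q x a (F n)) sums q x a (\<Union>n. F n)"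
    using kernel x a unfolding signed_kernel_def by blast
  moreover have "(\<Union>n. F n) = S" using x unfolding F_def by (auto split: if_splits)
  moreover have "(\<lambda>n. q x a (F n)) sums (\<Sum>n\<in>{0,1}. q x a (F n))"
  proof (rule sums_finite)
    have "q x a {} = 0" using kernel x a unfolding signed_kernel_def by blast
    then show "\<And>n. n \<notin> {0, 1} \<Longrightarrow> q x a (F n) = 0" unfolding F_def by simp
  qed simp
  ultimately have "q x a S = (\<Sum>n\<in>{0,1}. q x a (F n))"
    using sums_unique2 by metis
  then have "q x a S = q x a (S - {x}) + q x a {x}" by (simp add: F_def)
  then show ?thesis using cons unfolding qx_def by simp
qed



lemma lsc_approx:
  fixes S :: "'s::metric_space set" and f :: "'s \<Rightarrow> ennreal"
  assumes Sne: "S \<noteq> {}" and lsc: "lsc_on (top_of_set S) f"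
  obtains g :: "nat \<Rightarrow> 's \<Rightarrow> real" where "\<And>n. continuous_on S (g n)"
    "\<And>n y. 0 \<le> g n y" "\<And>n y. y \<in> S \<Longrightarrow> g n y \<le> real n" "\<And>m n y. m \<le> n \<Longrightarrow> g m y \<le> g n y"
    "\<And>y. y \<in> S \<Longrightarrow> f y = (SUP n. ennreal (g n y))"
proof -
  define \<phi> where "\<phi> n y = enn2real (min (of_nat n) (f y))" for n :: nat and y
  have phi_nn: "0 \<le> \<phi> n y" for n y unfolding \<phi>_def by simp
  have phi_le: "\<phi> n y \<le> real n" for n y
    unfolding \<phi>_def by (metis enn2real_leI ennreal_of_nat_eq_real_of_nat min.cobounded1 of_nat_0_le_iff)
  have phi_enn: "ennreal (\<phi> n y) = min (of_nat n) (f y)" for n y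
    unfolding \<phi>_def using ennreal_of_nat_eq_real_of_nat[of n]
    by (auto simp: min_def intro!: ennreal_enn2real dest: order.strict_trans2[OF _ of_nat_less_top[THEN less_imp_le]]
        ; metis linorder_not_le of_nat_less_top order.strict_trans)
  have phi_mono: "m \<le> n \<Longrightarrow> \<phi> m y \<le> \<phi> n y" for m n y
  proof -
    assume "m \<le> n"
    then have "min (of_nat m) (f y) \<le> min (of_nat n) (f y)"
      by (intro min.mono) auto
    then show ?thesis using phi_enn[of m y] phi_enn[of n y] phi_nn[of m y] phi_nn[of n y]
      by (metis ennreal_le_iff)
  qed
  define g where "g n x = (INF y\<in>S. \<phi> n y + real n * dist x y)" for n x
  have bdd: "bdd_below ((\<lambda>y. \<phi> n y + real n * dist x y) ` S)" for n x
    by (rule bdd_belowI2[where m=0]) (simp add: phi_nn)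
  have g_nn: "0 \<le> g n x" for n x
    unfolding g_def using Sne by (intro cINF_greatest) (auto simp: phi_nn)
  have g_le_phi: "x \<in> S \<Longrightarrow> g n x \<le> \<phi> n x" for n x
    unfolding g_def using cINF_lower[OF bdd, of x n x] by simp
  have g_lip: "g n x \<le> g n x' + real n * dist x x'" for n x x'
  proof -
    have "g n x - real n * dist x x' \<le> g n x'"
      unfolding g_def[of n x']
    proof (rule cINF_greatest[OF Sne])
      fix y assume y: "y \<in> S"
      have "g n x \<le> \<phi> n y + real n * dist x y"
        unfolding g_def using cINF_lower[OF bdd y] .
      also have "\<dots> \<le> \<phi> n y + real n * (dist x' y + dist x x')"
        by (intro add_left_mono mult_left_mono) (use dist_triangle[of x y x'] in \<open>auto simp: dist_commute\<close>)
      finally show "g n x - real n * dist x x' \<le> \<phi> n y + real n * dist x' y"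
        by (simp add: algebra_simps)
    qed
    then show ?thesis by simp
  qed
  have cont: "continuous_on S (g n)" for n
  proof (rule lipschitz_on_continuous_on)
    show "(real n)-lipschitz_on S (g n)"
    proof (rule lipschitz_onI)
      fix x y assume "x \<in> S" "y \<in> S"
      show "dist (g n x) (g n y) \<le> real n * dist x y"
        using g_lip[of n x y] g_lip[of n y x] by (simp add: dist_real_def dist_commute abs_le_iff)
    qed simp
  qed
  have g_bd: "y \<in> S \<Longrightarrow> g n y \<le> real n" for n y
    using g_le_phi[of y n] phi_le[of n y] by simp
  have g_mono: "m \<le> n \<Longrightarrow> g m y \<le> g n y" for m n y
    unfolding g_def
  proof (rule cINF_mono[OF Sne bdd])
    fix b assume "m \<le> n" "b \<in> S"
    then show "\<exists>a\<in>S. \<phi> m a + real m * dist y a \<le> \<phi> n b + real n * dist y b"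
      by (intro bexI[of _ b] add_mono phi_mono mult_right_mono) auto
  qed
  have lim: "f y = (SUP n. ennreal (g n y))" if y: "y \<in> S" for y
  proof (rule antisym)
    show "(SUP n. ennreal (g n y)) \<le> f y"
    proof (rule SUP_least)
      fix n
      have "ennreal (g n y) \<le> ennreal (\<phi> n y)" using g_le_phi[OF y] by (rule ennreal_leI)
      also have "\<dots> \<le> f y" using phi_enn by simp
      finally show "ennreal (g n y) \<le> f y" .
    qed
  next
    have approx: "\<exists>n. r \<le> g n y" if r: "0 \<le> r" "ennreal r < f y" for r
    proof -
      have "openin (top_of_set S) {z \<in> S. ennreal r < f z}"
        using lsc unfolding lsc_on_def by simp
      with y r obtain \<delta> where d: "\<delta> > 0" "\<And>z. z \<in> S \<Longrightarrow> dist z y < \<delta> \<Longrightarrow> ennreal r < f z"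
        unfolding openin_euclidean_subtopology_iff by blast
      obtain n :: nat where n: "r \<le> real n" "r / \<delta> \<le> real n"
        using real_arch_simple[of "max r (r/\<delta>)"] by auto
      have "r \<le> g n y" unfolding g_def
      proof (rule cINF_greatest[OF Sne])
        fix z assume z: "z \<in> S"
        show "r \<le> \<phi> n z + real n * dist y z"
        proof (cases "dist z y < \<delta>")
          case True
          then have "ennreal r < f z" using d z by auto
          then have "ennreal r \<le> ennreal (\<phi> n z)" using n phi_enn[of n z]
            by (simp add: ennreal_of_nat_eq_real_of_nat)
          then have "r \<le> \<phi> n z" using phi_nn by (simp add: ennreal_le_iff)
          moreover have "0 \<le> real n * dist y z" by simp
          ultimately show ?thesis by linarith
        next
          case False
          have "r \<le> real n * \<delta>" using n d(1) by (simp add: divide_le_eq)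
          also have "\<dots> \<le> real n * dist y z" using False by (simp add: dist_commute mult_left_mono)
          finally show ?thesis using phi_nn[of n z] by simp
        qed
      qed
      then show ?thesis by blast
    qed
    show "f y \<le> (SUP n. ennreal (g n y))"
    proof (rule ccontr)
      assume "\<not> ?thesis"
      then have lt: "(SUP n. ennreal (g n y)) < f y" by simp
      then obtain u where u: "(SUP n. ennreal (g n y)) < u" "u < f y" using dense by blast
      then have "u < top" using top.extremum_strict[of "f y"] by (metis order.strict_trans2 top_greatest)
      then obtain r where r: "u = ennreal r" "0 \<le> r" by (cases u) auto
      obtain n where "r \<le> g n y" using approx[OF r(2)] u r by auto
      then have "u \<le> ennreal (g n y)" using r by simp
      also have "\<dots> \<le> (SUP n. ennreal (g n y))" by (rule SUP_upper) simp
      finally show False using u by simp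
    qed
  qed
  show ?thesis
    by (rule that[OF cont g_nn g_bd g_mono lim])
qed

theorem lemmaA1:
  fixes S :: "'s::polish_space set" and A :: "'b::polish_space set"
    and q :: "'s \<Rightarrow> 'b \<Rightarrow> 's set \<Rightarrow> real"
  assumes S_borel: "S \<in> sets borel" and S_ne: "S \<noteq> {}"
    and A_borel: "A \<in> sets borel" and A_ne: "A \<noteq> {}"
    and kernel: "signed_kernel S A q"
    and tilde_nonneg: "\<And>x a \<Gamma>. x \<in> S \<Longrightarrow> a \<in> A \<Longrightarrow> \<Gamma> \<in> sets (restrict_space borel S)
                         \<Longrightarrow> q x a (\<Gamma> - {x}) \<ge> 0"
    and conservative: "\<And>x a. x \<in> S \<Longrightarrow> a \<in> A \<Longrightarrow> q x a S = 0"
    and stable: "\<And>x. x \<in> S \<Longrightarrow> bdd_above ((\<lambda>a. qx q x a) ` A)"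
    and hyp_b: "\<And>f :: 's \<Rightarrow> real. continuous_on S f \<Longrightarrow> bounded (f ` S) \<Longrightarrow>
                  continuous_on (S \<times> A)
                    (\<lambda>(x, a). (\<integral>y. f y \<partial>(qtilde S q x a)) / qx q x a)"
    and hyp_c: "continuous_on (S \<times> A) (\<lambda>(x, a). qx q x a)"
  shows "(\<forall>c :: 's \<times> 'b \<Rightarrow> ennreal. lsc_on (top_of_set (S \<times> A)) c \<longrightarrow>
            lsc_on (top_of_set (S \<times> A)) (\<lambda>(x, a). ediv (c (x, a)) (qx q x a)))
       \<and> (\<forall>f :: 's \<Rightarrow> real. continuous_on S f \<and> bounded (f ` S) \<longrightarrow>
            continuous_on (S \<times> A) (\<lambda>(x, a). q_integral S q x a f))
       \<and> (\<forall>f :: 's \<Rightarrow> ennreal. lsc_on (top_of_set S) f \<longrightarrow>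
            lsc_on (top_of_set (S \<times> A)) (\<lambda>(x, a). \<integral>\<^sup>+ y. f y \<partial>(qtilde S q x a)))"
  proof -
  have Qnn: "0 \<le> qx q x a" if "x \<in> S" "a \<in> A" for x a
  proof -
    have "S \<in> sets (restrict_space borel S)" using S_borel by (simp add: sets_restrict_space_iff)
    then show ?thesis using qx_eq[OF kernel that S_borel conservative[OF that]] tilde_nonneg[OF that] by simp
  qed
  have emS: "emeasure (qtilde S q x a) (space (qtilde S q x a)) = ennreal (qx q x a)"
    if "x \<in> S" "a \<in> A" for x a
  proof -
    have "S \<in> sets (restrict_space borel S)" using S_borel by (simp add: sets_restrict_space_iff)
    then show ?thesis
      using qt_emeasure[OF kernel that tilde_nonneg[OF that]] qx_eq[OF kernel that S_borel conservative[OF that]]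
      by (simp add: qt_space_sets)
  qed
  have fin: "finite_measure (qtilde S q x a)" if "x \<in> S" "a \<in> A" for x a
    by (rule finite_measureI) (simp add: emS[OF that])
  have K: "(\<integral>y. f y \<partial>(qtilde S q x a)) = qx q x a * ((\<integral>y. f y \<partial>(qtilde S q x a)) / qx q x a)"
    if "x \<in> S" "a \<in> A" for x a and f :: "'s \<Rightarrow> real"
  proof (cases "qx q x a = 0")
    case True
    let ?M = "qtilde S q x a"
    have "space ?M \<in> null_sets ?M" using emS[OF that] True by (auto simp: null_sets_def)
    then have "AE y in ?M. f y = 0" by (rule AE_I') auto
    then have "(\<integral>y. f y \<partial>?M) = 0" by (rule integral_eq_zero_AE)
    then show ?thesis by simp
  qed simp
  have P1: "\<forall>c :: 's \<times> 'b \<Rightarrow> ennreal. lsc_on (top_of_set (S \<times> A)) c \<longrightarrow>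
            lsc_on (top_of_set (S \<times> A)) (\<lambda>(x, a). ediv (c (x, a)) (qx q x a))"
  proof (intro allI impI)
    fix c :: "'s \<times> 'b \<Rightarrow> ennreal" assume lsc: "lsc_on (top_of_set (S \<times> A)) c"
    let ?Q = "\<lambda>z. qx q (fst z) (snd z)"
    have hc': "continuous_on (S \<times> A) ?Q" using hyp_c by (simp add: case_prod_unfold)
    define U where "U t = {z \<in> S \<times> A. t < ediv (c z) (?Q z)}" for t
    have "openin (top_of_set (S \<times> A)) (U t)" for t
    proof (subst openin_subopen, intro ballI)
      fix z0 assume z0: "z0 \<in> U t"
      then have z0S: "z0 \<in> S \<times> A" and lt: "t < ediv (c z0) (?Q z0)" by (auto simp: U_def)
      have Q0: "0 \<le> ?Q z0" using Qnn z0S by (auto simp: mem_Times_iff)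
      have "t < top" using less_le_trans[OF lt top_greatest] .
      then obtain s where s: "t = ennreal s" "0 \<le> s" by (cases t) auto
      have key: "ennreal (s * ?Q z0) < c z0"
      proof (cases "?Q z0 = 0")
        case True
        then have "c z0 \<noteq> 0" using lt by (auto simp: ediv_def)
        then show ?thesis using True by (simp add: zero_less_iff_neq_zero)
      next
        case False
        then have Qp: "0 < ?Q z0" using Q0 by simp
        have "ennreal s < c z0 / ennreal (?Q z0)" using lt False s by (simp add: ediv_def)
        then have "ennreal s * ennreal (?Q z0) < c z0 / ennreal (?Q z0) * ennreal (?Q z0)"
          by (rule ennreal_mult_strict_right_mono) (use Qp in auto)
        also have "\<dots> = c z0" using Qp by (simp add: ennreal_divide_times)
        finally show ?thesis using s Q0 by (simp add: ennreal_mult)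
      qed
      obtain u where u: "ennreal (s * ?Q z0) < u" "u < c z0" using dense[OF key] by blast
      have "u < top" using less_le_trans[OF u(2) top_greatest] .
      then obtain v where v: "u = ennreal v" "0 \<le> v" by (cases u) auto
      have sv: "s * ?Q z0 < v" using u(1) v s(2) Q0 by (simp add: ennreal_less_iff)
      define r where "r = (if s = 0 then ?Q z0 + 1 else v / s)"
      have r1: "?Q z0 < r" using sv s(2) by (auto simp: r_def field_simps)
      have r2: "s * r \<le> v" using v s by (auto simp: r_def)
      let ?T = "{z \<in> S \<times> A. u < c z} \<inter> ((S \<times> A) \<inter> ?Q -` {..<r})"
      have o1: "openin (top_of_set (S \<times> A)) {z \<in> S \<times> A. u < c z}"
        using lsc by (simp add: lsc_on_def)
      have o2: "openin (top_of_set (S \<times> A)) ((S \<times> A) \<inter> ?Q -` {..<r})"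
        by (rule continuous_openin_preimage[OF hc', where T=UNIV]) auto
      show "\<exists>T. openin (top_of_set (S \<times> A)) T \<and> z0 \<in> T \<and> T \<subseteq> U t"
      proof (intro exI conjI)
        show "openin (top_of_set (S \<times> A)) ?T" using o1 o2 by (rule openin_Int)
        show "z0 \<in> ?T" using z0S u(2) r1 by auto
        show "?T \<subseteq> U t"
        proof
          fix z assume z: "z \<in> ?T"
          then have zS: "z \<in> S \<times> A" and cz: "u < c z" and Qr: "?Q z < r" by auto
          have Qz: "0 \<le> ?Q z" using Qnn zS by (auto simp: mem_Times_iff)
          have "t < ediv (c z) (?Q z)"
          proof (cases "?Q z = 0")
            case True
            have "c z \<noteq> 0" using cz by auto
            then show ?thesis using True s by (simp add: ediv_def)
          next
            case False
            then have Qp: "0 < ?Q z" using Qz by simp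
            have "s * ?Q z \<le> s * r" using Qr s(2) by (intro mult_left_mono) auto
            then have "ennreal (s * ?Q z) \<le> u" using r2 v by simp
            then have lt2: "ennreal s * ennreal (?Q z) < c z"
              using cz s(2) Qz by (metis ennreal_mult le_less_trans)
            show ?thesis
            proof (rule ccontr)
              assume "\<not> ?thesis"
              then have "c z / ennreal (?Q z) \<le> ennreal s" using False s by (simp add: ediv_def not_less)
              then have "c z / ennreal (?Q z) * ennreal (?Q z) \<le> ennreal s * ennreal (?Q z)"
                by (rule mult_right_mono) simp
              then have "c z \<le> ennreal s * ennreal (?Q z)" using Qp by (simp add: ennreal_divide_times)
              then show False using lt2 by simp
            qed
          qed
          then show "z \<in> U t" using zS by (simp add: U_def)
        qed
      qed
    qed
    then show "lsc_on (top_of_set (S \<times> A)) (\<lambda>(x, a). ediv (c (x, a)) (qx q x a))"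
      unfolding lsc_on_def U_def by (simp add: case_prod_unfold)
  qed
  have P2: "\<forall>f :: 's \<Rightarrow> real. continuous_on S f \<and> bounded (f ` S) \<longrightarrow>
            continuous_on (S \<times> A) (\<lambda>(x, a). q_integral S q x a f)"
  proof (intro allI impI)
    fix f :: "'s \<Rightarrow> real" assume f: "continuous_on S f \<and> bounded (f ` S)"
    have c1: "continuous_on (S \<times> A) (\<lambda>z. qx q (fst z) (snd z))"
      using hyp_c by (simp add: case_prod_unfold)
    have c2: "continuous_on (S \<times> A) (\<lambda>z. (\<integral>y. f y \<partial>(qtilde S q (fst z) (snd z))) / qx q (fst z) (snd z))"
      using hyp_b[of f] f by (simp add: case_prod_unfold)
    have c3: "continuous_on (S \<times> A) (\<lambda>z. f (fst z))"
      using f by (intro continuous_on_compose2[of S f _ fst] continuous_intros) auto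
    have "continuous_on (S \<times> A) (\<lambda>z. qx q (fst z) (snd z) * ((\<integral>y. f y \<partial>(qtilde S q (fst z) (snd z))) / qx q (fst z) (snd z))
          - qx q (fst z) (snd z) * f (fst z))"
      by (intro continuous_intros c1 c2 c3)
    then show "continuous_on (S \<times> A) (\<lambda>(x, a). q_integral S q x a f)"
    proof (rule continuous_on_cong[THEN iffD1, rotated 2])
      fix z assume z: "z \<in> S \<times> A"
      show "qx q (fst z) (snd z) * ((\<integral>y. f y \<partial>(qtilde S q (fst z) (snd z))) / qx q (fst z) (snd z))
          - qx q (fst z) (snd z) * f (fst z) = (\<lambda>(x, a). q_integral S q x a f) z"
        unfolding q_integral_def case_prod_unfold
        using K[of "fst z" "snd z" f] z by (simp add: mem_Times_iff)
    qed simp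
  qed
  have P3: "\<forall>f :: 's \<Rightarrow> ennreal. lsc_on (top_of_set S) f \<longrightarrow>
            lsc_on (top_of_set (S \<times> A)) (\<lambda>(x, a). \<integral>\<^sup>+ y. f y \<partial>(qtilde S q x a))"
  proof (intro allI impI)
    fix f :: "'s \<Rightarrow> ennreal" assume lsc: "lsc_on (top_of_set S) f"
    obtain g :: "nat \<Rightarrow> 's \<Rightarrow> real" where g: "\<And>n. continuous_on S (g n)"
      "\<And>n y. 0 \<le> g n y" "\<And>n y. y \<in> S \<Longrightarrow> g n y \<le> real n" "\<And>m n y. m \<le> n \<Longrightarrow> g m y \<le> g n y"
      "\<And>y. y \<in> S \<Longrightarrow> f y = (SUP n. ennreal (g n y))"
      using lsc_approx[OF S_ne lsc] by blast
    have c1: "continuous_on (S \<times> A) (\<lambda>z. qx q (fst z) (snd z))"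
      using hyp_c by (simp add: case_prod_unfold)
    define h where "h n z = ennreal (qx q (fst z) (snd z) *
        ((\<integral>y. g n y \<partial>(qtilde S q (fst z) (snd z))) / qx q (fst z) (snd z)))" for n z
    have hc: "continuous_on (S \<times> A) (h n)" for n
    proof -
      have bd: "bounded (g n ` S)"
        unfolding bounded_real using g(2,3) by (intro exI[of _ "real n"]) auto
      have "continuous_on (S \<times> A) (\<lambda>z. (\<integral>y. g n y \<partial>(qtilde S q (fst z) (snd z))) / qx q (fst z) (snd z))"
        using hyp_b[OF g(1) bd] by (simp add: case_prod_unfold)
      then show ?thesis unfolding h_def by (intro continuous_on_ennreal continuous_on_mult c1)
    qed
    have heq: "(\<integral>\<^sup>+y. f y \<partial>(qtilde S q x a)) = (SUP n. h n (x, a))" if "x \<in> S" "a \<in> A" for x a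
    proof -
      let ?M = "qtilde S q x a"
      interpret finite_measure ?M by (rule fin[OF that])
      have meas: "g n \<in> borel_measurable ?M" for n
        using borel_measurable_continuous_on_restrict[OF g(1)]
        by (simp add: measurable_cong_sets[OF qt_space_sets(2) refl])
      have "(\<integral>\<^sup>+y. f y \<partial>?M) = (\<integral>\<^sup>+y. (SUP n. ennreal (g n y)) \<partial>?M)"
        by (rule nn_integral_cong) (simp add: qt_space_sets g(5))
      also have "\<dots> = (SUP n. \<integral>\<^sup>+y. ennreal (g n y) \<partial>?M)"
        by (rule nn_integral_monotone_convergence_SUP) (auto simp: incseq_def le_fun_def intro!: ennreal_leI g(4) measurable_compose[OF meas measurable_ennreal])
      also have "\<dots> = (SUP n. ennreal (\<integral>y. g n y \<partial>?M))"
      proof (rule SUP_cong[OF refl], rule nn_integral_eq_integral)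
        fix n
        show "integrable ?M (g n)"
          by (rule integrable_const_bound[where B="real n"]) (auto simp: qt_space_sets g(2) g(3) meas)
        show "AE y in ?M. 0 \<le> g n y" by (simp add: g(2))
      qed
      also have "\<dots> = (SUP n. h n (x, a))" unfolding h_def fst_conv snd_conv
        by (rule SUP_cong[OF refl], rule arg_cong[where f=ennreal], rule K[OF that])
      finally show ?thesis .
    qed
    show "lsc_on (top_of_set (S \<times> A)) (\<lambda>(x, a). \<integral>\<^sup>+ y. f y \<partial>(qtilde S q x a))"
      unfolding lsc_on_def
    proof
      fix t
      have "{z \<in> topspace (top_of_set (S \<times> A)). t < (\<lambda>(x, a). \<integral>\<^sup>+ y. f y \<partial>(qtilde S q x a)) z}
          = (\<Union>n. (S \<times> A) \<inter> h n -` {t<..})"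
        using heq by (force simp: less_SUP_iff)
      moreover have "openin (top_of_set (S \<times> A)) (\<Union>n. (S \<times> A) \<inter> h n -` {t<..})"
        by (intro openin_Union) (auto intro!: continuous_openin_preimage[OF hc, where T=UNIV])
      ultimately show "openin (top_of_set (S \<times> A))
          {z \<in> topspace (top_of_set (S \<times> A)). t < (\<lambda>(x, a). \<integral>\<^sup>+ y. f y \<partial>(qtilde S q x a)) z}"
        by simp
    qed
  qed
  show ?thesis using P1 P2 P3 by blast
qed

end
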